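(* Let $s\in\mathscr S_+^\circ$, let $d=\min\{i\in\omega: s_i=0\}$, and let $s^+\in\mathscr S_+$ be defined by $\operatorname{supp}(s^+)=\operatorname{supp}(s)\cup\{d\}$. Then $s^+\in\mathscr S_+^\circ$, $s\prec s^+$, and $\mathfrak d(s^+)=\mathfrak d(s)+1$.
   Context: $\omega=\{0,1,\dots\}$, $[m]=\{1,\dots,m\}$. A finite sign sequence is $s\in\{-,0,+\}^\omega$ with finitely many nonzero entries; $\mathscr S$ their set; $\operatorname{supp}(s)=\{i:s_i\ne0\}$; $\mathscr S_+=\mathscr S\cap\{0,+\}^\omega$. $\mathrm{SC}(t)$ = number of pairs $i<j$ with $\{t_i,t_j\}=\{-,+\}$ and $t_k=0$ for $i<k<j$. $\mathfrak d(s)=\max\{\mathrm{SC}(t):t\in\mathscr S,\ t_i\in\{-,0,s_i\}\ \forall i\}$. $\mathscr S_+^\circ=\{s\in\mathscr S_+:\mathfrak d(s)=\#\operatorname{supp}(s)\}$. Interval decomposition of $s\in\mathscr S_+$: $\operatorname{supp}(s)=X_0\amalg\cdots\amalg X_k$ into intervals with $0\in X_0$ if $0\in\operatorname{supp}(s)$ else $X_0=\emptyset$, $X_i\neq\emptyset$ for $i\in[k]$, $\min X_i-\max X_{i-1}\ge2$ ($\max\emptyset=-\infty$). $\lfloor X_i\rfloor=\{\min X_i-1\}\amalg X_i$ if $\#X_i$ odd, else $X_i$; $\lceil X_i\rceil=X_i\amalg\{\max X_i+1\}$ if $\#X_i$ odd, else $X_i$; $\operatorname{supp}(\lfloor s\rfloor)=X_0\amalg\lfloor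 X_1\rfloor\amalg\cdots\amalg\lfloor X_k\rfloor$, $\operatorname{supp}(\lceil s\rceil)=X_0\amalg\lceil X_1\rceil\amalg\cdots\amalg\lceil X_k\rceil$. On $\mathscr S_+^\circ$: $s\preceq_0 s'$ iff, with supports $\{d_1>\cdots>d_m\}$, $\{d'_1>\cdots>d'_{m'}\}$, $m\le m'$ and $d_i\le d'_i$ for $i\in[m]$. On $\mathscr S_+$: $s\preceq s'$ iff $s=s'$, or $s\ne s'$ and $\lceil s\rceil\preceq_0\lfloor s'\rfloor$; $s\prec s'$ means $s\preceq s'$, $s\ne s'$. *)

theory Defs
  imports Main
begin

datatype sign = Neg | Zero | Pos

definition ssupp :: "(nat \<Rightarrow> sign) \<Rightarrow> nat set" where
  "ssupp s = {i. s i \<noteq> Zero}"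

definition SS :: "(nat \<Rightarrow> sign) set" where
  "SS = {s. finite (ssupp s)}"

definition SSplus :: "(nat \<Rightarrow> sign) set" where
  "SSplus = {s. s \<in> SS \<and> (\<forall>i. s i \<in> {Zero, Pos})}"

definition SC :: "(nat \<Rightarrow> sign) \<Rightarrow> nat" where
  "SC t = card {(i, j). i < j \<and> {t i, t j} = {Neg, Pos} \<and> (\<forall>k. i < k \<and> k < j \<longrightarrow> t k = Zero)}"

definition dd :: "(nat \<Rightarrow> sign) \<Rightarrow> nat" where
  "dd s = Max {SC t | t. t \<in> SS \<and> (\<forall>i. t i \<in> {Neg, Zero, s i})}"

definition SSplus_circ :: "(nat \<Rightarrow> sign) set" where
  "SSplus_circ = {s. s \<in> SSplus \<and> dd s = card (ssupp s)}"

definition is_block :: "nat set \<Rightarrow> nat \<Rightarrow> nat \<Rightarrow> bool" where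
  "is_block A a b \<longleftrightarrow> a \<le> b \<and> {a..b} \<subseteq> A \<and> (a = 0 \<or> a - 1 \<notin> A) \<and> Suc b \<notin> A"

(* blocks X_i with i \<ge> 1 are exactly the blocks with min > 0; X_0 is the block starting at 0 *)
definition floor_supp :: "nat set \<Rightarrow> nat set" where
  "floor_supp A = A \<union> {a - 1 | a b. is_block A a b \<and> 0 < a \<and> odd (card {a..b})}"

definition ceil_supp :: "nat set \<Rightarrow> nat set" where
  "ceil_supp A = A \<union> {Suc b | a b. is_block A a b \<and> 0 < a \<and> odd (card {a..b})}"

definition seq_of_supp :: "nat set \<Rightarrow> (nat \<Rightarrow> sign)" where
  "seq_of_supp A = (\<lambda>i. if i \<in> A then Pos else Zero)"

definition sfloor :: "(nat \<Rightarrow> sign) \<Rightarrow> (nat \<Rightarrow> sign)" where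
  "sfloor s = seq_of_supp (floor_supp (ssupp s))"

definition sceil :: "(nat \<Rightarrow> sign) \<Rightarrow> (nat \<Rightarrow> sign)" where
  "sceil s = seq_of_supp (ceil_supp (ssupp s))"

definition le0 :: "(nat \<Rightarrow> sign) \<Rightarrow> (nat \<Rightarrow> sign) \<Rightarrow> bool" where
  "le0 s s' \<longleftrightarrow>
     (let L = rev (sorted_list_of_set (ssupp s)); L' = rev (sorted_list_of_set (ssupp s'))
      in length L \<le> length L' \<and> (\<forall>i < length L. L ! i \<le> L' ! i))"

definition sle :: "(nat \<Rightarrow> sign) \<Rightarrow> (nat \<Rightarrow> sign) \<Rightarrow> bool" where
  "sle s s' \<longleftrightarrow> s = s' \<or> (s \<noteq> s' \<and> le0 (sceil s) (sfloor s'))"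

definition sprec :: "(nat \<Rightarrow> sign) \<Rightarrow> (nat \<Rightarrow> sign) \<Rightarrow> bool" where
  "sprec s s' \<longleftrightarrow> sle s s' \<and> s \<noteq> s'"

end

theory Submission
  imports Defs
begin


lemma kth:
  fixes A :: "nat set"
  assumes "finite A" "i < card A"
  shows "rev (sorted_list_of_set A) ! i \<in> A \<and> card {y\<in>A. rev (sorted_list_of_set A) ! i < y} = i"
proof -
  define xs where "xs = sorted_list_of_set A"
  have st: "sorted_wrt (<) xs" and sx: "set xs = A" and lx: "length xs = card A" and dx: "distinct xs"
    using assms by (auto simp: xs_def)
  define n where "n = length xs"
  define k where "k = n - Suc i"
  have kn: "k < n" using assms lx by (simp add: k_def n_def)
  have r: "rev xs ! i = xs ! k" using assms lx by (simp add: rev_nth k_def n_def)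
  have "{y\<in>A. xs ! k < y} = set (drop (Suc k) xs)"
  proof (intro set_eqI iffI)
    fix y assume y: "y \<in> {y\<in>A. xs ! k < y}"
    then obtain m where m: "m < n" "y = xs ! m" using sx by (auto simp: in_set_conv_nth n_def)
    have "k < m"
    proof (rule ccontr)
      assume "\<not> k < m"
      then have "m \<le> k" by simp
      then have "xs ! m \<le> xs ! k" using st kn
        by (metis le_less less_imp_le_nat n_def sorted_wrt_nth_less le_less_trans)
      then show False using y m by simp
    qed
    then show "y \<in> set (drop (Suc k) xs)" using m
      by (auto simp: in_set_conv_nth n_def intro!: exI[of _ "m - Suc k"])
  next
    fix y assume "y \<in> set (drop (Suc k) xs)"
    then obtain m where m: "m < n - Suc k" "y = xs ! (Suc k + m)"
      by (auto simp: in_set_conv_nth n_def)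
    then have "xs ! k < y" using st kn by (simp add: sorted_wrt_nth_less n_def)
    moreover have "y \<in> A" using m sx by (auto simp: n_def)
    ultimately show "y \<in> {y\<in>A. xs ! k < y}" by simp
  qed
  then have "card {y\<in>A. xs ! k < y} = n - Suc k" using dx by (simp add: distinct_card n_def)
  moreover have "n - Suc k = i" using kn assms lx by (simp add: k_def n_def)
  moreover have "xs ! k \<in> A" using kn sx n_def by auto
  ultimately show ?thesis using r xs_def by simp
qed

lemma le0_mono:
  fixes A B :: "nat set"
  assumes "finite B" "A \<subseteq> B"
  shows "le0 (seq_of_supp A) (seq_of_supp B)"
proof -
  have fA: "finite A" using assms finite_subset by blast
  have ss: "\<And>C. ssupp (seq_of_supp C) = C" by (auto simp: ssupp_def seq_of_supp_def)
  have cAB: "card A \<le> card B" using assms card_mono by blast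
  show ?thesis unfolding le0_def Let_def ss
  proof (intro conjI allI impI)
    show "length (rev (sorted_list_of_set A)) \<le> length (rev (sorted_list_of_set B))"
      using cAB fA assms by simp
    fix i assume "i < length (rev (sorted_list_of_set A))"
    then have iA: "i < card A" using fA by simp
    then have iB: "i < card B" using cAB by simp
    define x where "x = rev (sorted_list_of_set A) ! i"
    define y where "y = rev (sorted_list_of_set B) ! i"
    have x: "x \<in> A" "card {z\<in>A. x < z} = i" using kth[OF fA iA] x_def by auto
    have y: "card {z\<in>B. y < z} = i" using kth[OF assms(1) iB] y_def by auto
    show "x \<le> y"
    proof (rule ccontr)
      assume "\<not> x \<le> y"
      then have "insert x {z\<in>A. x < z} \<subseteq> {z\<in>B. y < z}" using x assms by auto
      then have "card (insert x {z\<in>A. x < z}) \<le> card {z\<in>B. y < z}"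
        using assms by (intro card_mono) auto
      moreover have "card (insert x {z\<in>A. x < z}) = Suc i" using x fA by simp
      ultimately show False using y by simp
    qed
  qed
qed


definition pr :: "(nat \<Rightarrow> sign) \<Rightarrow> (nat \<times> nat) set" where
  "pr t = {(i, j). i < j \<and> {t i, t j} = {Neg, Pos} \<and> (\<forall>k. i < k \<and> k < j \<longrightarrow> t k = Zero)}"

lemma SC_pr: "SC t = card (pr t)" by (simp add: SC_def pr_def)

lemma pr_fin: "t \<in> SS \<Longrightarrow> finite (pr t)"
proof -
  assume "t \<in> SS"
  then have "finite (ssupp t \<times> ssupp t)" by (simp add: SS_def)
  moreover have "pr t \<subseteq> ssupp t \<times> ssupp t" by (auto simp: pr_def ssupp_def doubleton_eq_iff)
  ultimately show ?thesis using finite_subset by blast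
qed

lemma SSplus_Pos: "s \<in> SSplus \<Longrightarrow> (s i = Pos) = (i \<in> ssupp s)"
proof -
  assume "s \<in> SSplus"
  then have "s i \<in> {Zero, Pos}" by (simp add: SSplus_def)
  then show ?thesis by (auto simp: ssupp_def)
qed

lemma pr_bound:
  assumes s: "s \<in> SSplus" and t: "\<forall>i. t i \<in> {Neg, Zero, s i}"
  shows "card (pr t) \<le> 2 * card (ssupp s)"
proof -
  define g where "g = (\<lambda>(i::nat, j::nat). if t i = Pos then (i, True) else (j, False))"
  have fin: "finite (ssupp s)" using s by (simp add: SSplus_def SS_def)
  have img: "g ` pr t \<subseteq> ssupp s \<times> UNIV"
  proof
    fix x assume "x \<in> g ` pr t"
    then obtain i j where ij: "(i, j) \<in> pr t" "x = g (i, j)" by auto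
    show "x \<in> ssupp s \<times> UNIV"
    proof (cases "t i = Pos")
      case True
      then have "s i = Pos" using t by (metis insertE singletonD sign.distinct)
      then show ?thesis using ij True SSplus_Pos[OF s] by (simp add: g_def)
    next
      case False
      then have "t j = Pos" using ij by (auto simp: pr_def doubleton_eq_iff)
      then have "s j = Pos" using t by (metis insertE singletonD sign.distinct)
      then show ?thesis using ij False SSplus_Pos[OF s] by (simp add: g_def)
    qed
  qed
  have inj: "inj_on g (pr t)"
  proof (rule inj_onI)
    fix x y assume x: "x \<in> pr t" and y: "y \<in> pr t" and e: "g x = g y"
    obtain i j where xi: "x = (i, j)" by (cases x)
    obtain i' j' where yi: "y = (i', j')" by (cases y)
    have P: "i < j" "t i \<noteq> Zero" "t j \<noteq> Zero" "\<forall>k. i < k \<and> k < j \<longrightarrow> t k = Zero"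
      using x xi by (auto simp: pr_def doubleton_eq_iff)
    have Q: "i' < j'" "t i' \<noteq> Zero" "t j' \<noteq> Zero" "\<forall>k. i' < k \<and> k < j' \<longrightarrow> t k = Zero"
      using y yi by (auto simp: pr_def doubleton_eq_iff)
    show "x = y"
    proof (cases "t i = Pos")
      case True
      then have "t i' = Pos" "i' = i" using e xi yi by (auto simp: g_def split: if_splits)
      moreover have "j = j'"
      proof (rule ccontr)
        assume "j \<noteq> j'"
        then consider "j < j'" | "j' < j" by linarith
        then show False using P Q \<open>i' = i\<close> by cases auto
      qed
      ultimately show ?thesis using xi yi by simp
    next
      case False
      then have "t i' \<noteq> Pos" "j' = j" using e xi yi by (auto simp: g_def split: if_splits)
      moreover have "i = i'"
      proof (rule ccontr)
        assume "i \<noteq> i'"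
        then consider "i < i'" | "i' < i" by linarith
        then show False using P Q \<open>j' = j\<close> by cases auto
      qed
      ultimately show ?thesis using xi yi by simp
    qed
  qed
  have "card (pr t) \<le> card (ssupp s \<times> (UNIV :: bool set))"
    using card_inj_on_le[OF inj img] fin by simp
  also have "\<dots> = 2 * card (ssupp s)" by (simp add: card_cartesian_product)
  finally show ?thesis .
qed

definition DS :: "(nat \<Rightarrow> sign) \<Rightarrow> nat set" where
  "DS s = {SC t | t. t \<in> SS \<and> (\<forall>i. t i \<in> {Neg, Zero, s i})}"

lemma dd_DS: "dd s = Max (DS s)" by (simp add: dd_def DS_def)

lemma DS_fin: "s \<in> SSplus \<Longrightarrow> finite (DS s)"
proof -
  assume s: "s \<in> SSplus"
  have "DS s \<subseteq> {..2 * card (ssupp s)}" using pr_bound[OF s] by (auto simp: DS_def SC_pr)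
  then show ?thesis using finite_subset by blast
qed

lemma DS_ne: "DS s \<noteq> {}"
proof -
  have "(\<lambda>_. Zero) \<in> SS" by (simp add: SS_def ssupp_def)
  then have "SC (\<lambda>_. Zero) \<in> DS s" unfolding DS_def by auto
  then show ?thesis by auto
qed

lemma dd_ge: "s \<in> SSplus \<Longrightarrow> t \<in> SS \<Longrightarrow> \<forall>i. t i \<in> {Neg, Zero, s i} \<Longrightarrow> SC t \<le> dd s"
  unfolding dd_DS by (rule Max_ge[OF DS_fin]) (auto simp: DS_def)

lemma dd_obtain: "s \<in> SSplus \<Longrightarrow> \<exists>t. t \<in> SS \<and> (\<forall>i. t i \<in> {Neg, Zero, s i}) \<and> dd s = SC t"
proof -
  assume s: "s \<in> SSplus"
  have "Max (DS s) \<in> DS s" using DS_fin[OF s] DS_ne by (rule Max_in)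
  then show ?thesis unfolding dd_DS DS_def by auto
qed


definition ee :: "nat set \<Rightarrow> nat \<Rightarrow> nat" where
  "ee A i = (LEAST j. i \<le> j \<and> j \<notin> A)"

definition tc :: "nat set \<Rightarrow> nat \<Rightarrow> nat \<Rightarrow> sign" where
  "tc A M i = (if i \<in> A then (if odd (ee A i - i) then Pos else Neg) else if i \<le> M then Neg else Zero)"

lemma ee_props:
  assumes "A \<subseteq> {..<M}"
  shows "i \<le> ee A i \<and> ee A i \<notin> A"
proof -
  have "i \<le> i + M \<and> i + M \<notin> A" using assms by auto
  then show ?thesis unfolding ee_def by (rule LeastI)
qed

lemma ee_step: "i \<in> A \<Longrightarrow> ee A i = ee A (Suc i)"
proof -
  assume "i \<in> A"
  then have "\<And>j. (i \<le> j \<and> j \<notin> A) = (Suc i \<le> j \<and> j \<notin> A)"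
    by (metis Suc_leD Suc_le_eq le_neq_implies_less)
  then show ?thesis unfolding ee_def by simp
qed

lemma ee_last: "Suc i \<notin> A \<Longrightarrow> i \<in> A \<Longrightarrow> ee A i = Suc i"
proof -
  assume a: "Suc i \<notin> A" "i \<in> A"
  show ?thesis unfolding ee_def
  proof (rule Least_equality)
    show "i \<le> Suc i \<and> Suc i \<notin> A" using a by simp
    fix y assume "i \<le> y \<and> y \<notin> A"
    then have "i \<le> y" "y \<noteq> i" using a by auto
    then show "Suc i \<le> y" by simp
  qed
qed

lemma ee_block: "is_block A a b \<Longrightarrow> ee A a = Suc b"
proof -
  assume a: "is_block A a b"
  show ?thesis unfolding ee_def
  proof (rule Least_equality)
    show "a \<le> Suc b \<and> Suc b \<notin> A" using a by (simp add: is_block_def)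
    fix y assume y: "a \<le> y \<and> y \<notin> A"
    show "Suc b \<le> y"
    proof (rule ccontr)
      assume "\<not> Suc b \<le> y"
      then have "y \<in> {a..b}" using y by simp
      then show False using a y by (auto simp: is_block_def)
    qed
  qed
qed


lemma tc_pair:
  assumes M: "A \<subseteq> {..<M}" and i: "i \<in> A"
  shows "(i, Suc i) \<in> pr (tc A M)"
proof (cases "Suc i \<in> A")
  case True
  define E where "E = ee A (Suc i)"
  have "Suc i \<le> E" using ee_props[OF M] E_def by blast
  moreover have "ee A i = E" using ee_step[OF i] E_def by simp
  ultimately have "odd (ee A i - i) \<noteq> odd (ee A (Suc i) - Suc i)" using E_def
    by (simp add: Suc_diff_Suc Suc_le_lessD)
  then show ?thesis using True i by (auto simp: pr_def tc_def)
next
  case False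
  have "i < M" using M i by auto
  then show ?thesis using False i ee_last[OF False i] by (auto simp: pr_def tc_def)
qed

lemma tc_blockpair:
  assumes M: "A \<subseteq> {..<M}" and b: "is_block A a b" "0 < a" "odd (card {a..b})"
  shows "(a - 1, a) \<in> pr (tc A M)"
proof -
  have aA: "a \<in> A" "a - 1 \<notin> A" using b by (auto simp: is_block_def)
  then have "a < M" using M by auto
  moreover have "ee A a - a = card {a..b}" using ee_block[OF b(1)] by simp
  ultimately show ?thesis using aA b by (auto simp: pr_def tc_def)
qed

lemma tc_SS: "A \<subseteq> {..<M} \<Longrightarrow> tc A M \<in> SS"
proof -
  assume "A \<subseteq> {..<M}"
  then have "ssupp (tc A M) \<subseteq> {..M}" by (auto simp: ssupp_def tc_def split: if_splits)
  then show ?thesis unfolding SS_def using finite_subset by auto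
qed

lemma tc_allowed: "s \<in> SSplus \<Longrightarrow> \<forall>i. tc (ssupp s) M i \<in> {Neg, Zero, s i}"
proof
  fix i assume s: "s \<in> SSplus"
  show "tc (ssupp s) M i \<in> {Neg, Zero, s i}"
  proof (cases "i \<in> ssupp s")
    case True
    then have "s i = Pos" using SSplus_Pos[OF s] by blast
    then show ?thesis by (simp add: tc_def)
  qed (simp add: tc_def)
qed

lemma lower:
  assumes s: "s \<in> SSplus"
  shows "card (ssupp s) \<le> dd s"
    and "is_block (ssupp s) a b \<Longrightarrow> 0 < a \<Longrightarrow> odd (card {a..b}) \<Longrightarrow> Suc (card (ssupp s)) \<le> dd s"
proof -
  define A where "A = ssupp s"
  have "finite A" using s by (simp add: A_def SSplus_def SS_def)
  then obtain M where M: "A \<subseteq> {..<M}" using finite_nat_set_iff_bounded by (metis lessThan_iff subsetI)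
  define t where "t = tc A M"
  have tS: "t \<in> SS" using tc_SS[OF M] t_def by simp
  have fp: "finite (pr t)" using pr_fin[OF tS] .
  have le: "SC t \<le> dd s" using dd_ge[OF s tS] tc_allowed[OF s] t_def A_def by simp
  have im: "(\<lambda>i. (i, Suc i)) ` A \<subseteq> pr t" using tc_pair[OF M] t_def by auto
  have ci: "card ((\<lambda>i. (i, Suc i)) ` A) = card A" by (rule card_image) (auto simp: inj_on_def)
  have "card A \<le> card (pr t)" using card_mono[OF fp im] ci by simp
  then show "card (ssupp s) \<le> dd s" using le SC_pr A_def by simp
  assume b: "is_block (ssupp s) a b" "0 < a" "odd (card {a..b})"
  have p: "(a - 1, a) \<in> pr t" using tc_blockpair[OF M] b t_def A_def by simp
  have na: "a - 1 \<notin> A" using b A_def by (auto simp: is_block_def)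
  have "insert (a - 1, a) ((\<lambda>i. (i, Suc i)) ` A) \<subseteq> pr t" using im p by simp
  moreover have "card (insert (a - 1, a) ((\<lambda>i. (i, Suc i)) ` A)) = Suc (card A)"
    using ci na \<open>finite A\<close> by (subst card_insert_disjoint) auto
  ultimately have "Suc (card A) \<le> card (pr t)" using card_mono[OF fp] by metis
  then show "Suc (card (ssupp s)) \<le> dd s" using le SC_pr A_def by simp
qed



lemma sgn_pair: "({a, b} = {Neg, Pos}) = (a \<noteq> Zero \<and> b \<noteq> Zero \<and> a \<noteq> b)"
  by (cases a; cases b) (auto simp: doubleton_eq_iff)

lemma pr_iff: "((i, j) \<in> pr t) = (i < j \<and> t i \<noteq> Zero \<and> t j \<noteq> Zero \<and> t i \<noteq> t j \<and> (\<forall>k. i < k \<and> k < j \<longrightarrow> t k = Zero))"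
  by (simp add: pr_def sgn_pair)

fun neg :: "sign \<Rightarrow> sign" where
  "neg Neg = Pos" | "neg Zero = Zero" | "neg Pos = Neg"

lemma neg_Zero: "(neg x = Zero) = (x = Zero)" by (cases x) auto
lemma neg_inj: "(neg x = neg y) = (x = y)" by (cases x; cases y) auto

lemma ss_seq: "ssupp (seq_of_supp C) = C" by (auto simp: ssupp_def seq_of_supp_def)

lemma upper:
  assumes s: "s \<in> SSplus" and sp: "splus = seq_of_supp (ssupp s \<union> {d})"
    and sd: "s d = Zero" and below: "\<forall>i<d. s i \<noteq> Zero"
  shows "dd splus \<le> Suc (dd s)"
proof -
  have spS: "splus \<in> SSplus"
  proof -
    have "finite (ssupp splus)" using s sp ss_seq by (simp add: SSplus_def SS_def)
    moreover have "\<forall>i. splus i \<in> {Zero, Pos}" using sp by (simp add: seq_of_supp_def)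
    ultimately show ?thesis by (simp add: SSplus_def SS_def)
  qed
  obtain t where t: "t \<in> SS" "\<forall>i. t i \<in> {Neg, Zero, splus i}" "dd splus = SC t"
    using dd_obtain[OF spS] by blast
  have same: "\<And>i. i \<noteq> d \<Longrightarrow> splus i = s i"
  proof -
    fix i assume "i \<noteq> d"
    have "s i \<in> {Zero, Pos}" using s by (simp add: SSplus_def)
    then show "splus i = s i" using \<open>i \<noteq> d\<close> sp by (auto simp: seq_of_supp_def ssupp_def)
  qed
  show ?thesis
  proof (cases "t d = Pos")
    case False
    have "\<forall>i. t i \<in> {Neg, Zero, s i}"
    proof
      fix i show "t i \<in> {Neg, Zero, s i}"
      proof (cases "i = d")
        case True
        have "t d \<in> {Neg, Zero, Pos}" by (cases "t d") auto
        then show ?thesis using True False sd by auto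
      next
        case False
        then show ?thesis using t(2) same by metis
      qed
    qed
    then have "SC t \<le> dd s" using dd_ge[OF s t(1)] by simp
    then show ?thesis using t(3) by simp
  next
    case True
    define t' where "t' = (\<lambda>i. if i \<le> d then neg (t i) else t i)"
    have sup: "ssupp t' = ssupp t" by (auto simp: ssupp_def t'_def neg_Zero)
    have t'S: "t' \<in> SS" using t(1) sup by (simp add: SS_def)
    have all: "\<forall>i. t' i \<in> {Neg, Zero, s i}"
    proof
      fix i show "t' i \<in> {Neg, Zero, s i}"
      proof (cases "i < d")
        case True
        have "s i \<in> {Zero, Pos}" using s by (simp add: SSplus_def)
        then have "s i = Pos" using below True by auto
        moreover have "t' i \<in> {Neg, Zero, Pos}" by (cases "t' i") auto
        ultimately show ?thesis by simp
      next
        case False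
        show ?thesis
        proof (cases "i = d")
          case True
          then show ?thesis using \<open>t d = Pos\<close> by (simp add: t'_def)
        next
          case False
          then have "t' i = t i" using \<open>\<not> i < d\<close> by (simp add: t'_def)
          then show ?thesis using t(2) same[OF False] by metis
        qed
      qed
    qed
    have le: "SC t' \<le> dd s" using dd_ge[OF s t'S all] .
    define j0 where "j0 = (LEAST j. d < j \<and> t j \<noteq> Zero)"
    have sub: "pr t \<subseteq> insert (d, j0) (pr t')"
    proof
      fix x assume x: "x \<in> pr t"
      obtain i j where ij: "x = (i, j)" by (cases x)
      have P: "i < j" "t i \<noteq> Zero" "t j \<noteq> Zero" "t i \<noteq> t j" "\<forall>k. i < k \<and> k < j \<longrightarrow> t k = Zero"
        using x ij pr_iff by auto
      show "x \<in> insert (d, j0) (pr t')"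
      proof (cases "j \<le> d")
        case True
        have "(i, j) \<in> pr t'" unfolding pr_iff using P True
          by (auto simp: t'_def neg_Zero neg_inj)
        then show ?thesis using ij by simp
      next
        case jd: False
        show ?thesis
        proof (cases "d < i")
          case True
          have "(i, j) \<in> pr t'" unfolding pr_iff using P True jd
            by (auto simp: t'_def)
          then show ?thesis using ij by simp
        next
          case False
          have "i = d"
          proof (rule ccontr)
            assume "i \<noteq> d"
            then have "i < d" using False by simp
            then have "t d = Zero" using P jd by auto
            then show False using \<open>t d = Pos\<close> by simp
          qed
          moreover have "j = j0" unfolding j0_def
          proof (rule Least_equality[symmetric])
            show "d < j \<and> t j \<noteq> Zero" using jd P by simp
            fix y assume "d < y \<and> t y \<noteq> Zero"
            then show "j \<le> y" using P \<open>i = d\<close> by (metis not_le)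
          qed
          ultimately show ?thesis using ij by simp
        qed
      qed
    qed
    have "card (pr t) \<le> card (insert (d, j0) (pr t'))"
      using sub pr_fin[OF t'S] by (intro card_mono) auto
    also have "\<dots> \<le> Suc (card (pr t'))" using pr_fin[OF t'S] by (simp add: card_insert_if)
    finally show ?thesis using t(3) le SC_pr by simp
  qed
qed

theorem mainTheorem13:
  fixes s :: "nat \<Rightarrow> sign"
  assumes "s \<in> SSplus_circ"
  defines "splus \<equiv> seq_of_supp (ssupp s \<union> {LEAST i. s i = Zero})"
  shows "splus \<in> SSplus_circ \<and> sprec s splus \<and> dd splus = dd s + 1"
proof -
  have s: "s \<in> SSplus" and dds: "dd s = card (ssupp s)" using assms(1) by (auto simp: SSplus_circ_def)
  define P where "P = ssupp s"
  have fP: "finite P" using s by (simp add: P_def SSplus_def SS_def)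
  define d where "d = (LEAST i. s i = Zero)"
  have zer: "\<And>i. (s i = Zero) = (i \<notin> P)" by (simp add: P_def ssupp_def)
  have ex: "\<exists>i. s i = Zero"
  proof -
    obtain M where "P \<subseteq> {..<M}" using fP finite_nat_set_iff_bounded by (metis lessThan_iff subsetI)
    then have "M \<notin> P" by auto
    then show ?thesis using zer by blast
  qed
  have sd: "s d = Zero" unfolding d_def using ex by (rule LeastI_ex)
  have below: "\<forall>i<d. s i \<noteq> Zero" unfolding d_def using not_less_Least by blast
  have spd: "splus = seq_of_supp (P \<union> {d})" by (simp add: splus_def P_def d_def)
  have dP: "d \<notin> P" using sd zer by simp
  have spS: "splus \<in> SSplus"
  proof -
    have "finite (ssupp splus)" using fP spd ss_seq by simp
    moreover have "\<forall>i. splus i \<in> {Zero, Pos}" using spd by (simp add: seq_of_supp_def)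
    ultimately show ?thesis by (simp add: SSplus_def SS_def)
  qed
  have ssp: "ssupp splus = P \<union> {d}" using spd ss_seq by simp
  have csp: "card (ssupp splus) = Suc (card P)" using ssp dP fP by simp
  have up: "dd splus \<le> Suc (dd s)" using upper[OF s spd[unfolded P_def] sd below] .
  have lo: "card (ssupp splus) \<le> dd splus" using lower(1)[OF spS] .
  have ddsp: "dd splus = Suc (card P)" using up lo csp dds P_def by simp
  have circ: "splus \<in> SSplus_circ" using spS ddsp csp by (simp add: SSplus_circ_def)
  have ne: "s \<noteq> splus"
  proof
    assume "s = splus"
    then have "s d = Pos" using spd by (simp add: seq_of_supp_def)
    then show False using sd by simp
  qed
  have ceil: "ceil_supp P = P"
  proof -
    have "\<not> (\<exists>a b. is_block P a b \<and> 0 < a \<and> odd (card {a..b}))"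
    proof
      assume "\<exists>a b. is_block P a b \<and> 0 < a \<and> odd (card {a..b})"
      then obtain a b where "is_block P a b" "0 < a" "odd (card {a..b})" by blast
      then have "Suc (card P) \<le> dd s" using lower(2)[OF s] P_def by simp
      then show False using dds P_def by simp
    qed
    then show ?thesis unfolding ceil_supp_def by blast
  qed
  have sc: "sceil s = seq_of_supp P" using ceil by (simp add: sceil_def P_def)
  have fl: "sfloor splus = seq_of_supp (floor_supp (P \<union> {d}))" by (simp add: sfloor_def ssp)
  have fsub: "floor_supp (P \<union> {d}) \<subseteq> (P \<union> {d}) \<union> (\<lambda>a. a - 1) ` (P \<union> {d})"
    unfolding floor_supp_def is_block_def by auto
  have ffin: "finite (floor_supp (P \<union> {d}))" using fsub fP finite_subset by blast
  have psub: "P \<subseteq> floor_supp (P \<union> {d})" by (auto simp: floor_supp_def)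
  have "le0 (sceil s) (sfloor splus)" unfolding sc fl by (rule le0_mono[OF ffin psub])
  then have "sprec s splus" using ne by (simp add: sprec_def sle_def)
  then show ?thesis using circ ddsp dds P_def by simp
qed


end
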